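(* Let $n>2k-t$, $k>t$, and let $\mathcal{S}_a$ be a maximal set of $k$-spaces in $\mathrm{AG}(n,q)$ pairwise intersecting in at least a $t$-space. Let $\psi(\mathcal{S}_a)=\min\{\dim T: T\text{ an affine subspace},\ \dim(T\cap\alpha)\geq t\ \forall\alpha\in\mathcal{S}_a\}$ and let $\mathcal{T}$ be the set of all affine $\psi(\mathcal{S}_a)$-dimensional subspaces meeting every element of $\mathcal{S}_a$ in at least a $t$-space. If $\psi(\mathcal{S}_a)=t+1$ and $|\mathcal{T}|\leq 2$, then \[|\mathcal{S}_a|\leq 2\left[{n-t-1\atop k-t-1}\right]_q+(\theta_{t+1}\theta_{k-t}-\theta_{t+1}-\theta_{k-t})\theta_{k-t}\left[{n-t-2\atop k-t-2}\right]_q.\]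
   Context: Affine subspaces intersect in at least a $t$-space if their affine intersection has dimension at least $t$. $\left[{n\atop k}\right]_q=\frac{(q^n-1)\cdots(q^{n-k+1}-1)}{(q^k-1)\cdots(q-1)}$ for $k>0$, $=1$ for $k=0$; $\theta_m=\frac{q^{m+1}-1}{q-1}$. Maximal means no further affine $k$-space can be added keeping the property. *)

theory Defs
  imports "HOL-Analysis.Analysis"
begin

text \<open>The affine space AG(n,q) is modelled as the vector space 'a^'n over a finite
field 'a with CARD('a) = q and CARD('n) = n.\<close>

definition aff_sub :: "('a::field ^ 'n) set \<Rightarrow> bool" where
  "aff_sub S \<longleftrightarrow> (\<exists>v W. vec.subspace W \<and> S = (\<lambda>w. v + w) ` W)"

definition adim :: "('a::field ^ 'n) set \<Rightarrow> nat" where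
  "adim S = vec.dim {x - y | x y. x \<in> S \<and> y \<in> S}"

definition kspace :: "nat \<Rightarrow> ('a::field ^ 'n) set \<Rightarrow> bool" where
  "kspace k S \<longleftrightarrow> aff_sub S \<and> adim S = k"

definition meets_t :: "nat \<Rightarrow> ('a::field ^ 'n) set \<Rightarrow> ('a ^ 'n) set \<Rightarrow> bool" where
  "meets_t t S T \<longleftrightarrow> S \<inter> T \<noteq> {} \<and> adim (S \<inter> T) \<ge> t"

definition t_intersecting :: "nat \<Rightarrow> nat \<Rightarrow> ('a::field ^ 'n) set set \<Rightarrow> bool" where
  "t_intersecting k t F \<longleftrightarrow> (\<forall>S\<in>F. kspace k S) \<and> (\<forall>S\<in>F. \<forall>T\<in>F. meets_t t S T)"

definition maximal_t_intersecting :: "nat \<Rightarrow> nat \<Rightarrow> ('a::field ^ 'n) set set \<Rightarrow> bool" where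
  "maximal_t_intersecting k t F \<longleftrightarrow> t_intersecting k t F \<and>
     (\<forall>B. kspace k B \<and> B \<notin> F \<longrightarrow> \<not> t_intersecting k t (insert B F))"

definition psi :: "nat \<Rightarrow> ('a::field ^ 'n) set set \<Rightarrow> nat" where
  "psi t F = (LEAST d. \<exists>T. aff_sub T \<and> adim T = d \<and> (\<forall>S\<in>F. meets_t t T S))"

definition psi_spaces :: "nat \<Rightarrow> ('a::field ^ 'n) set set \<Rightarrow> ('a ^ 'n) set set" where
  "psi_spaces t F = {T. aff_sub T \<and> adim T = psi t F \<and> (\<forall>S\<in>F. meets_t t T S)}"

text \<open>Gaussian binomial coefficient [n k]_q; taken to be 0 for k < 0 (and it is 0 for
k > n \<ge> 0 by the product formula).\<close>
definition gbinom :: "nat \<Rightarrow> int \<Rightarrow> int \<Rightarrow> real" where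
  "gbinom q n k = (if k < 0 then 0 else
     (\<Prod>i<nat k. (real q ^ (nat n - i) - 1) / (real q ^ (i + 1) - 1)))"

definition theta :: "nat \<Rightarrow> nat \<Rightarrow> real" where
  "theta q m = (real q ^ (m + 1) - 1) / (real q - 1)"

end

theory Submission
  imports Defs
begin
lemma card_span_indep:
  fixes B :: "('a::{field,finite}^'n) set"
  assumes "vec.independent B"
  shows "card (vec.span B) = CARD('a) ^ card B"
proof -
  have "finite B" using vec.finiteI_independent assms by blast
  then show ?thesis using assms
  proof (induction B rule: finite_induct)
    case empty
    then show ?case by simp
  next
    case (insert x B)
    have xB: "x \<notin> vec.span B" and iB: "vec.independent B"
      using insert.prems insert.hyps vec.independent_insert by metis+
    have eq: "vec.span (insert x B) = (\<lambda>(c,y). c *s x + y) ` (UNIV \<times> vec.span B)"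
    proof
      show "vec.span (insert x B) \<subseteq> (\<lambda>(c,y). c *s x + y) ` (UNIV \<times> vec.span B)"
      proof
        fix z assume "z \<in> vec.span (insert x B)"
        then obtain c where "z - c *s x \<in> vec.span B" using vec.span_insert by blast
        then show "z \<in> (\<lambda>(c,y). c *s x + y) ` (UNIV \<times> vec.span B)"
          by (intro image_eqI[of _ _ "(c, z - c *s x)"]) auto
      qed
    next
      show "(\<lambda>(c,y). c *s x + y) ` (UNIV \<times> vec.span B) \<subseteq> vec.span (insert x B)"
      proof clarify
        fix c y assume "y \<in> vec.span B"
        hence "y \<in> vec.span (insert x B)" using vec.span_mono[of B "insert x B"] by blast
        moreover have "c *s x \<in> vec.span (insert x B)" by (simp add: vec.span_base vec.span_scale)
        ultimately show "c *s x + y \<in> vec.span (insert x B)" by (simp add: vec.span_add)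
      qed
    qed
    have inj: "inj_on (\<lambda>(c,y). c *s x + y) (UNIV \<times> vec.span B)"
    proof (rule inj_onI, clarsimp)
      fix c y c' y'
      assume y: "y \<in> vec.span B" and y': "y' \<in> vec.span B" and e: "c *s x + y = c' *s x + y'"
      show "c = c' \<and> y = y'"
      proof (cases "c = c'")
        case True then show ?thesis using e by simp
      next
        case False
        have "(c - c') *s x = y' - y" using e by (simp add: algebra_simps vector_sub_rdistrib)
        hence "(inverse (c - c')) *s ((c - c') *s x) = (inverse (c - c')) *s (y' - y)" by simp
        moreover have "(inverse (c - c')) *s ((c - c') *s x) = x"
          using False by (simp only: vec.scale_scale) simp
        ultimately have "x = (inverse (c - c')) *s (y' - y)" by simp
        hence "x \<in> vec.span B" using y y' by (simp add: vec.span_diff vec.span_scale)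
        then show ?thesis using xB by simp
      qed
    qed
    have "card (vec.span (insert x B)) = card ((UNIV :: 'a set) \<times> vec.span B)"
      unfolding eq using inj by (simp add: card_image)
    also have "\<dots> = CARD('a) * card (vec.span B)" by (simp add: card_cartesian_product)
    also have "\<dots> = CARD('a) ^ card (insert x B)" using insert.IH[OF iB] insert.hyps by simp
    finally show ?case .
  qed
qed

lemma card_subspace:
  fixes W :: "('a::{field,finite}^'n) set"
  assumes "vec.subspace W"
  shows "card W = CARD('a) ^ vec.dim W"
proof -
  obtain B where B: "B \<subseteq> W" "vec.independent B" "W \<subseteq> vec.span B" "card B = vec.dim W"
    using vec.basis_exists by blast
  have "vec.span B = W" using B assms vec.span_subspace by blast
  then show ?thesis using card_span_indep[OF B(2)] B(4) by simp
qed


fun indl :: "('a::field^'n) set \<Rightarrow> ('a^'n) list \<Rightarrow> bool" where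
  "indl U [] = True"
| "indl U (v # vs) = (indl U vs \<and> v \<notin> vec.span (U \<union> set vs))"

lemma indl_dim:
  fixes U :: "('a::field^'n) set"
  assumes "vec.subspace U" "indl U vs"
  shows "vec.dim (vec.span (U \<union> set vs)) = vec.dim U + length vs"
  using assms(2)
proof (induction vs)
  case Nil
  then show ?case using assms(1) by (simp add: vec.span_eq_iff)
next
  case (Cons v vs)
  have "vec.dim (vec.span (U \<union> set (v # vs))) = vec.dim (insert v (U \<union> set vs))"
    by simp
  also have "\<dots> = vec.dim (U \<union> set vs) + 1"
    using Cons.prems by (simp add: vec.dim_insert)
  also have "\<dots> = vec.dim U + length (v # vs)"
    using Cons by simp
  finally show ?case .
qed

definition Lset :: "('a::field^'n) set \<Rightarrow> ('a^'n) set \<Rightarrow> nat \<Rightarrow> ('a^'n) list set" where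
  "Lset U V r = {vs. length vs = r \<and> set vs \<subseteq> V \<and> indl U vs}"

lemma finite_Lset: "finite (Lset U (V :: ('a::{field,finite}^'n) set) r)"
  unfolding Lset_def by (rule finite_subset[OF _ finite_lists_length_eq[of UNIV r]]) auto

lemma span_sub_in:
  fixes U V :: "('a::field^'n) set"
  assumes "vec.subspace V" "U \<subseteq> V" "set vs \<subseteq> V"
  shows "vec.span (U \<union> set vs) \<subseteq> V"
  using assms by (simp add: vec.span_minimal)

lemma card_Lset:
  fixes U V :: "('a::{field,finite}^'n) set"
  assumes U: "vec.subspace U" and V: "vec.subspace V" and UV: "U \<subseteq> V"
    and r: "vec.dim U + r \<le> vec.dim V"
  shows "card (Lset U V r) = (\<Prod>i<r. CARD('a) ^ vec.dim V - CARD('a) ^ (vec.dim U + i))"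
  using r
proof (induction r)
  case 0
  have "Lset U V 0 = {[]}" by (auto simp: Lset_def)
  then show ?case by simp
next
  case (Suc r)
  let ?q = "CARD('a)"
  define S where "S vs = V - vec.span (U \<union> set vs)" for vs
  have eq: "Lset U V (Suc r) = (\<lambda>(vs, v). v # vs) ` (SIGMA vs:Lset U V r. S vs)"
  proof
    show "Lset U V (Suc r) \<subseteq> (\<lambda>(vs, v). v # vs) ` (SIGMA vs:Lset U V r. S vs)"
    proof
      fix ws assume "ws \<in> Lset U V (Suc r)"
      then obtain v vs where "ws = v # vs" "length vs = r" "set (v#vs) \<subseteq> V" "indl U (v#vs)"
        unfolding Lset_def by (cases ws) auto
      then show "ws \<in> (\<lambda>(vs, v). v # vs) ` (SIGMA vs:Lset U V r. S vs)"
        by (intro image_eqI[of _ _ "(vs, v)"]) (auto simp: Lset_def S_def)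
    qed
  next
    show "(\<lambda>(vs, v). v # vs) ` (SIGMA vs:Lset U V r. S vs) \<subseteq> Lset U V (Suc r)"
      by (auto simp: Lset_def S_def)
  qed
  have inj: "inj_on (\<lambda>(vs, v). v # vs) (SIGMA vs:Lset U V r. S vs)"
    by (rule inj_onI) auto
  have cS: "card (S vs) = ?q ^ vec.dim V - ?q ^ (vec.dim U + r)" if "vs \<in> Lset U V r" for vs
  proof -
    have sub: "vec.span (U \<union> set vs) \<subseteq> V"
      using that V UV by (intro span_sub_in) (auto simp: Lset_def)
    have "vec.dim (vec.span (U \<union> set vs)) = vec.dim U + r"
      using indl_dim[OF U] that by (auto simp: Lset_def)
    then have "card (vec.span (U \<union> set vs)) = ?q ^ (vec.dim U + r)"
      using card_subspace[of "vec.span (U \<union> set vs)"] vec.subspace_span by metis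
    moreover have "card V = ?q ^ vec.dim V" using card_subspace[OF V] .
    ultimately show ?thesis unfolding S_def using sub by (simp add: card_Diff_subset)
  qed
  have "card (Lset U V (Suc r)) = card (SIGMA vs:Lset U V r. S vs)"
    unfolding eq using inj by (simp add: card_image)
  also have "\<dots> = (\<Sum>vs\<in>Lset U V r. card (S vs))"
    by (rule card_SigmaI) (auto simp: finite_Lset)
  also have "\<dots> = card (Lset U V r) * (?q ^ vec.dim V - ?q ^ (vec.dim U + r))"
    using cS by simp
  also have "\<dots> = (\<Prod>i<Suc r. ?q ^ vec.dim V - ?q ^ (vec.dim U + i))"
    using Suc by simp
  finally show ?case .
qed

lemma count_subspaces_nat:
  fixes U V :: "('a::{field,finite}^'n) set"
  assumes U: "vec.subspace U" and V: "vec.subspace V" and UV: "U \<subseteq> V"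
    and m1: "vec.dim U \<le> m" and m2: "m \<le> vec.dim V"
  shows "card {W. vec.subspace W \<and> vec.dim W = m \<and> U \<subseteq> W \<and> W \<subseteq> V}
           * (\<Prod>i<m - vec.dim U. CARD('a) ^ m - CARD('a) ^ (vec.dim U + i))
         = (\<Prod>i<m - vec.dim U. CARD('a) ^ vec.dim V - CARD('a) ^ (vec.dim U + i))"
proof -
  let ?X = "{W. vec.subspace W \<and> vec.dim W = m \<and> U \<subseteq> W \<and> W \<subseteq> V}"
  let ?r = "m - vec.dim U"
  have un: "Lset U V ?r = (\<Union>W\<in>?X. Lset U W ?r)"
  proof
    show "Lset U V ?r \<subseteq> (\<Union>W\<in>?X. Lset U W ?r)"
    proof
      fix vs assume vs: "vs \<in> Lset U V ?r"
      let ?W = "vec.span (U \<union> set vs)"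
      have "?W \<in> ?X"
        using vs indl_dim[OF U, of vs] m1 span_sub_in[OF V UV, of vs]
        by (auto simp: Lset_def vec.span_superset[THEN subsetD])
      moreover have "vs \<in> Lset U ?W ?r"
        using vs by (auto simp: Lset_def vec.span_superset[THEN subsetD])
      ultimately show "vs \<in> (\<Union>W\<in>?X. Lset U W ?r)" by blast
    qed
  next
    show "(\<Union>W\<in>?X. Lset U W ?r) \<subseteq> Lset U V ?r"
      by (auto simp: Lset_def)
  qed
  have det: "W = vec.span (U \<union> set vs)" if "W \<in> ?X" "vs \<in> Lset U W ?r" for W vs
  proof -
    have s: "vec.span (U \<union> set vs) \<subseteq> W"
      using that span_sub_in[of W U vs] by (auto simp: Lset_def)
    have "vec.dim (vec.span (U \<union> set vs)) = m"
      using indl_dim[OF U, of vs] that m1 by (auto simp: Lset_def)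
    then show ?thesis using vec.subspace_dim_equal[OF vec.subspace_span _ s] that by auto
  qed
  have "card (Lset U V ?r) = (\<Sum>W\<in>?X. card (Lset U W ?r))"
    unfolding un
  proof (rule card_UN_disjoint)
    show "finite ?X" by simp
    show "\<forall>W\<in>?X. finite (Lset U W ?r)"
    proof
      fix W show "finite (Lset U W ?r)" by (rule finite_Lset)
    qed
    show "\<forall>W\<in>?X. \<forall>W'\<in>?X. W \<noteq> W' \<longrightarrow> Lset U W ?r \<inter> Lset U W' ?r = {}"
      using det by blast
  qed
  also have "\<dots> = (\<Sum>W\<in>?X. \<Prod>i<?r. CARD('a) ^ m - CARD('a) ^ (vec.dim U + i))"
    by (rule sum.cong) (use card_Lset[OF U] m1 in auto)
  finally show ?thesis using card_Lset[OF U V UV] m2 m1 by (simp add: mult.commute)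
qed

lemma card_field_ge2: "CARD('a::{field,finite}) \<ge> 2"
proof -
  have "card {0::'a, 1} = 2" by simp
  moreover have "card {0::'a, 1} \<le> CARD('a)" by (rule card_mono) auto
  ultimately show ?thesis by simp
qed

lemma gbinom_ratio:
  fixes q :: real and N u r :: nat
  assumes q: "q \<ge> 2" and r: "u + r \<le> N"
  shows "(\<Prod>i<r. q ^ N - q ^ (u + i)) / (\<Prod>i<r. q ^ (u + r) - q ^ (u + i))
         = (\<Prod>i<r. (q ^ (N - u - i) - 1) / (q ^ (i + 1) - 1))"
proof -
  have a: "(\<Prod>i<r. q ^ N - q ^ (u + i)) = (\<Prod>i<r. q ^ (u + i)) * (\<Prod>i<r. q ^ (N - u - i) - 1)"
    unfolding prod.distrib[symmetric]
  proof (rule prod.cong[OF refl])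
    fix i assume "i \<in> {..<r}"
    then have "N = (u + i) + (N - u - i)" using r by simp
    then have "q ^ N = q ^ (u + i) * q ^ (N - u - i)" by (metis power_add)
    then show "q ^ N - q ^ (u + i) = q ^ (u + i) * (q ^ (N - u - i) - 1)" by (simp add: algebra_simps)
  qed
  have b: "(\<Prod>i<r. q ^ (u + r) - q ^ (u + i)) = (\<Prod>i<r. q ^ (u + i)) * (\<Prod>i<r. q ^ (r - i) - 1)"
    unfolding prod.distrib[symmetric]
  proof (rule prod.cong[OF refl])
    fix i assume "i \<in> {..<r}"
    then have "u + r = (u + i) + (r - i)" by simp
    then have "q ^ (u + r) = q ^ (u + i) * q ^ (r - i)" by (metis power_add)
    then show "q ^ (u + r) - q ^ (u + i) = q ^ (u + i) * (q ^ (r - i) - 1)" by (simp add: algebra_simps)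
  qed
  have c: "(\<Prod>i<r. q ^ (r - i) - 1) = (\<Prod>i<r. q ^ (i + 1) - 1)"
  proof -
    have "(\<Prod>i<r. q ^ (r - i) - 1) = (\<Prod>i<r. (\<lambda>j. q ^ (j + 1) - 1) (r - Suc i))"
      by (rule prod.cong[OF refl]) (simp add: Suc_diff_Suc)
    also have "\<dots> = (\<Prod>i<r. q ^ (i + 1) - 1)" by (rule prod.nat_diff_reindex)
    finally show ?thesis .
  qed
  have pos0: "(\<Prod>i<r. q ^ (u + i)) > 0" using q by (intro prod_pos) auto
  have pos: "(\<Prod>i<r. q ^ (u + i)) \<noteq> 0" using pos0 by linarith
  have "((\<Prod>i<r. q ^ (u + i)) * (\<Prod>i<r. q ^ (N - u - i) - 1)) / ((\<Prod>i<r. q ^ (u + i)) * (\<Prod>i<r. q ^ (i + 1) - 1))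
     = (\<Prod>i<r. q ^ (N - u - i) - 1) / (\<Prod>i<r. q ^ (i + 1) - 1)"
    using pos by (rule mult_divide_mult_cancel_left)
  then show ?thesis unfolding a b c prod_dividef .
qed

lemma count_subspaces:
  fixes U V :: "('a::{field,finite}^'n) set"
  assumes U: "vec.subspace U" and V: "vec.subspace V" and UV: "U \<subseteq> V"
    and m1: "vec.dim U \<le> m" and m2: "m \<le> vec.dim V"
  shows "real (card {W. vec.subspace W \<and> vec.dim W = m \<and> U \<subseteq> W \<and> W \<subseteq> V})
       = gbinom CARD('a) (int (vec.dim V) - int (vec.dim U)) (int m - int (vec.dim U))"
proof -
  let ?X = "{W. vec.subspace W \<and> vec.dim W = m \<and> U \<subseteq> W \<and> W \<subseteq> V}"
  let ?q = "CARD('a)"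
  define u where "u = vec.dim U"
  define N where "N = vec.dim V"
  define r where "r = m - u"
  have mr: "m = u + r" using m1 unfolding r_def u_def by simp
  have rN: "u + r \<le> N" using m2 mr unfolding N_def by simp
  have q2: "real ?q \<ge> 2" using card_field_ge2[where 'a='a] by simp
  have nat_eq: "card ?X * (\<Prod>i<r. ?q ^ m - ?q ^ (u + i)) = (\<Prod>i<r. ?q ^ N - ?q ^ (u + i))"
    using count_subspaces_nat[OF U V UV m1 m2] unfolding u_def N_def r_def by simp
  have le1: "?q ^ (u + i) \<le> ?q ^ m" if "i < r" for i
    using that mr q2 by (intro power_increasing) auto
  have le2: "?q ^ (u + i) \<le> ?q ^ N" if "i < r" for i
    using that rN q2 by (intro power_increasing) auto
  have real_eq: "real (card ?X) * (\<Prod>i<r. real ?q ^ (u + r) - real ?q ^ (u + i))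
      = (\<Prod>i<r. real ?q ^ N - real ?q ^ (u + i))"
  proof -
    have "real (card ?X * (\<Prod>i<r. ?q ^ m - ?q ^ (u + i))) = real (\<Prod>i<r. ?q ^ N - ?q ^ (u + i))"
      using nat_eq by simp
    moreover have "real (\<Prod>i<r. ?q ^ m - ?q ^ (u + i)) = (\<Prod>i<r. real ?q ^ (u + r) - real ?q ^ (u + i))"
      unfolding of_nat_prod by (rule prod.cong[OF refl]) (use le1 mr in \<open>auto simp: of_nat_diff\<close>)
    moreover have "real (\<Prod>i<r. ?q ^ N - ?q ^ (u + i)) = (\<Prod>i<r. real ?q ^ N - real ?q ^ (u + i))"
      unfolding of_nat_prod by (rule prod.cong[OF refl]) (use le2 in \<open>auto simp: of_nat_diff\<close>)
    ultimately show ?thesis by simp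
  qed
  have nz: "(\<Prod>i<r. real ?q ^ (u + r) - real ?q ^ (u + i)) \<noteq> 0"
  proof -
    have "real ?q ^ (u + i) < real ?q ^ (u + r)" if "i < r" for i
      using that q2 by (intro power_strict_increasing) auto
    then have h: "\<forall>i\<in>{..<r}. real ?q ^ (u + r) - real ?q ^ (u + i) \<noteq> 0" by fastforce
    show ?thesis by (metis (no_types, lifting) h prod_zero_iff finite_lessThan)
  qed
  have "real (card ?X) = (\<Prod>i<r. real ?q ^ N - real ?q ^ (u + i)) / (\<Prod>i<r. real ?q ^ (u + r) - real ?q ^ (u + i))"
    using real_eq nz by (simp add: field_simps)
  also have "\<dots> = (\<Prod>i<r. (real ?q ^ (N - u - i) - 1) / (real ?q ^ (i + 1) - 1))"
    by (rule gbinom_ratio[OF q2 rN])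
  also have "\<dots> = gbinom ?q (int N - int u) (int m - int u)"
    unfolding gbinom_def using mr rN by (simp add: nat_diff_distrib)
  finally show ?thesis unfolding u_def N_def .
qed

definition aff :: "'a::field^'n \<Rightarrow> ('a^'n) set \<Rightarrow> ('a^'n) set" where
  "aff p W = (\<lambda>w. p + w) ` W"

definition dir :: "('a::field^'n) set \<Rightarrow> ('a^'n) set" where
  "dir S = {x - y | x y. x \<in> S \<and> y \<in> S}"

lemma adim_dir: "adim S = vec.dim (dir S)"
  unfolding adim_def dir_def ..

lemma dir_aff:
  assumes "vec.subspace W" shows "dir (aff p W) = W"
proof
  show "dir (aff p W) \<subseteq> W"
    using assms by (auto simp: dir_def aff_def intro: vec.subspace_diff)
  show "W \<subseteq> dir (aff p W)"
  proof
    fix w assume "w \<in> W"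
    then have a: "p + w \<in> aff p W" by (simp add: aff_def)
    have "p + 0 \<in> aff p W" unfolding aff_def using vec.subspace_0[OF assms] by (rule imageI)
    then have b: "p \<in> aff p W" by simp
    have "w = (p + w) - p" by simp
    then show "w \<in> dir (aff p W)" unfolding dir_def using a b by blast
  qed
qed

lemma aff_sub_aff: "vec.subspace W \<Longrightarrow> aff_sub (aff p W)"
  unfolding aff_sub_def aff_def by blast

lemma mem_aff: "x \<in> aff p W \<longleftrightarrow> x - p \<in> W"
  unfolding aff_def by (auto intro: image_eqI[of _ _ "x - p"])

lemma aff_sub_E:
  assumes "aff_sub S"
  shows "vec.subspace (dir S)" "S \<noteq> {}" "p \<in> S \<Longrightarrow> S = aff p (dir S)"
proof -
  obtain v W where W: "vec.subspace W" "S = aff v W"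
    using assms unfolding aff_sub_def aff_def by blast
  then show "vec.subspace (dir S)" by (metis dir_aff)
  show "S \<noteq> {}" using W vec.subspace_0 by (auto simp: aff_def)
  assume "p \<in> S"
  then have pv: "p - v \<in> W" using W mem_aff by blast
  have "S = aff p W"
  proof (rule set_eqI)
    fix x
    have "x - v \<in> W \<longleftrightarrow> x - p \<in> W"
    proof
      assume "x - v \<in> W"
      moreover have "x - p = (x - v) - (p - v)" by simp
      ultimately show "x - p \<in> W" using vec.subspace_diff[OF W(1) _ pv] by metis
    next
      assume "x - p \<in> W"
      moreover have "x - v = (x - p) + (p - v)" by simp
      ultimately show "x - v \<in> W" using vec.subspace_add[OF W(1) _ pv] by metis
    qed
    then show "x \<in> S \<longleftrightarrow> x \<in> aff p W" using W(2) mem_aff by blast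
  qed
  then show "S = aff p (dir S)" using W dir_aff[OF W(1)] by simp
qed

lemma mem_aff_sub:
  assumes "aff_sub S" "p \<in> S" shows "x \<in> S \<longleftrightarrow> x - p \<in> dir S"
  using aff_sub_E[OF assms(1)] assms(2) mem_aff by metis

lemma adim_aff: "vec.subspace W \<Longrightarrow> adim (aff p W) = vec.dim W"
  by (simp add: adim_dir dir_aff)

lemma dir_mono: "S \<subseteq> T \<Longrightarrow> dir S \<subseteq> dir T"
  unfolding dir_def by blast

lemma adim_mono: "S \<subseteq> T \<Longrightarrow> adim S \<le> adim T"
  unfolding adim_dir by (intro vec.dim_subset dir_mono)

lemma aff_eq:
  assumes "aff_sub S" "aff_sub T" "S \<subseteq> T" "adim T \<le> adim S"
  shows "S = T"
proof -
  obtain p where p: "p \<in> S" using aff_sub_E(2)[OF assms(1)] by blast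
  have "dir S = dir T"
    using vec.subspace_dim_equal[OF aff_sub_E(1)[OF assms(1)] aff_sub_E(1)[OF assms(2)] dir_mono[OF assms(3)]]
      assms(4) unfolding adim_dir by simp
  then show ?thesis
    using aff_sub_E(3)[OF assms(1) p] aff_sub_E(3)[OF assms(2)] p assms(3) by auto
qed

lemma aff_less:
  assumes "aff_sub S" "aff_sub T" "S \<subseteq> T" "S \<noteq> T"
  shows "adim S < adim T"
  using aff_eq[OF assms(1-3)] assms(4) by fastforce

lemma aff_int:
  assumes "aff_sub S" "aff_sub T" "p \<in> S" "p \<in> T"
  shows "S \<inter> T = aff p (dir S \<inter> dir T)" "aff_sub (S \<inter> T)" "dir (S \<inter> T) = dir S \<inter> dir T"
proof -
  show e: "S \<inter> T = aff p (dir S \<inter> dir T)"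
    using mem_aff_sub[OF assms(1,3)] mem_aff_sub[OF assms(2,4)] mem_aff by blast
  have sub: "vec.subspace (dir S \<inter> dir T)"
    using aff_sub_E(1)[OF assms(1)] aff_sub_E(1)[OF assms(2)] by (rule vec.subspace_inter)
  show "aff_sub (S \<inter> T)" unfolding e by (rule aff_sub_aff[OF sub])
  show "dir (S \<inter> T) = dir S \<inter> dir T" unfolding e by (rule dir_aff[OF sub])
qed

lemma aff_ext:
  fixes x :: "'a::field^'n"
  assumes S: "aff_sub S" and p: "p \<in> S"
  defines "E \<equiv> aff p (vec.span (insert (x - p) (dir S)))"
  shows "aff_sub E" "S \<subseteq> E" "x \<in> E"
    "\<And>U. aff_sub U \<Longrightarrow> S \<subseteq> U \<Longrightarrow> x \<in> U \<Longrightarrow> E \<subseteq> U"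
    "x \<notin> S \<Longrightarrow> adim E = adim S + 1"
proof -
  have sp: "vec.subspace (vec.span (insert (x - p) (dir S)))" by (rule vec.subspace_span)
  show "aff_sub E" unfolding E_def by (rule aff_sub_aff[OF sp])
  show "S \<subseteq> E"
  proof
    fix y assume "y \<in> S"
    then have "y - p \<in> dir S" using mem_aff_sub[OF S p] by blast
    then have "y - p \<in> vec.span (insert (x - p) (dir S))" by (simp add: vec.span_base)
    then show "y \<in> E" unfolding E_def mem_aff .
  qed
  show "x \<in> E" unfolding E_def mem_aff by (simp add: vec.span_base)
  show "E \<subseteq> U" if U: "aff_sub U" "S \<subseteq> U" "x \<in> U" for U
  proof -
    have pU: "p \<in> U" using U p by blast
    have "insert (x - p) (dir S) \<subseteq> dir U"
      using dir_mono[OF U(2)] mem_aff_sub[OF U(1) pU] U(3) by blast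
    then have "vec.span (insert (x - p) (dir S)) \<subseteq> dir U"
      using aff_sub_E(1)[OF U(1)] by (simp add: vec.span_minimal)
    then show ?thesis unfolding E_def using mem_aff_sub[OF U(1) pU] mem_aff by blast
  qed
  assume "x \<notin> S"
  then have "x - p \<notin> dir S" using mem_aff_sub[OF S p] by blast
  then have "x - p \<notin> vec.span (dir S)" using aff_sub_E(1)[OF S] by (metis vec.span_eq_iff)
  have "adim E = vec.dim (vec.span (insert (x - p) (dir S)))" unfolding E_def by (rule adim_aff[OF sp])
  also have "\<dots> = vec.dim (dir S) + 1" using \<open>x - p \<notin> vec.span (dir S)\<close> by (simp add: vec.dim_insert)
  finally show "adim E = adim S + 1" by (simp add: adim_dir)
qed

lemma aff_join:
  assumes S: "aff_sub S" and T: "aff_sub T" and p: "p \<in> S" "p \<in> T"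
  defines "J \<equiv> aff p (vec.span (dir S \<union> dir T))"
  shows "aff_sub J" "S \<subseteq> J" "T \<subseteq> J" "adim J + adim (S \<inter> T) = adim S + adim T"
proof -
  have sp: "vec.subspace (vec.span (dir S \<union> dir T))" by (rule vec.subspace_span)
  show "aff_sub J" unfolding J_def by (rule aff_sub_aff[OF sp])
  show "S \<subseteq> J" unfolding J_def using mem_aff_sub[OF S p(1)] mem_aff
    by (metis (no_types, lifting) Un_iff subsetI vec.span_base)
  show "T \<subseteq> J" unfolding J_def using mem_aff_sub[OF T p(2)] mem_aff
    by (metis (no_types, lifting) Un_iff subsetI vec.span_base)
  have dS: "vec.subspace (dir S)" and dT: "vec.subspace (dir T)"
    using aff_sub_E(1) S T by auto
  have "vec.span (dir S \<union> dir T) = {x + y |x y. x \<in> dir S \<and> y \<in> dir T}"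
  proof -
    have e1: "vec.span (dir S) = dir S" and e2: "vec.span (dir T) = dir T" using dS dT by simp_all
    show ?thesis unfolding vec.span_Un e1 e2 by (rule refl)
  qed
  then show "adim J + adim (S \<inter> T) = adim S + adim T"
    unfolding J_def adim_aff[OF sp] using vec.dim_sums_Int[OF dS dT] aff_int(3)[OF S T p]
    by (simp add: adim_dir)
qed

lemma adim_UNIV: "adim (UNIV :: ('a::field^'n) set) = CARD('n)"
proof -
  have "dir (UNIV :: ('a^'n) set) = UNIV" unfolding dir_def by (auto, metis diff_zero)
  then show ?thesis by (simp add: adim_dir card_cart_basis)
qed

lemma aff_sub_UNIV: "aff_sub (UNIV :: ('a::field^'n) set)"
proof -
  have "aff 0 (UNIV :: ('a^'n) set) = UNIV" unfolding aff_def by simp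
  moreover have "aff_sub (aff 0 (UNIV :: ('a^'n) set))" by (rule aff_sub_aff[OF vec.subspace_UNIV])
  ultimately show ?thesis by simp
qed

lemma count_aff:
  fixes A B :: "('a::{field,finite}^'n) set"
  assumes A: "aff_sub A" and B: "aff_sub B" and AB: "A \<subseteq> B" and m2: "m \<le> adim B"
  shows "real (card {X. aff_sub X \<and> adim X = m \<and> A \<subseteq> X \<and> X \<subseteq> B})
     \<le> gbinom CARD('a) (int (adim B) - int (adim A)) (int m - int (adim A))"
proof (cases "adim A \<le> m")
  case False
  then have "{X. aff_sub X \<and> adim X = m \<and> A \<subseteq> X \<and> X \<subseteq> B} = {}"
  proof -
    have "\<And>X. A \<subseteq> X \<Longrightarrow> adim A \<le> adim X" using adim_mono by blast
    then show ?thesis using False by auto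
  qed
  then show ?thesis using False by (simp add: gbinom_def)
next
  case m1: True
  obtain p where p: "p \<in> A" using aff_sub_E(2)[OF A] by blast
  let ?X = "{X. aff_sub X \<and> adim X = m \<and> A \<subseteq> X \<and> X \<subseteq> B}"
  let ?Y = "{W. vec.subspace W \<and> vec.dim W = m \<and> dir A \<subseteq> W \<and> W \<subseteq> dir B}"
  have inj: "inj_on dir ?X"
  proof (rule inj_onI)
    fix X Y assume "X \<in> ?X" "Y \<in> ?X" "dir X = dir Y"
    then show "X = Y" using aff_sub_E(3)[of X p] aff_sub_E(3)[of Y p] p by auto
  qed
  have img: "dir ` ?X \<subseteq> ?Y"
    using aff_sub_E(1) dir_mono by (auto simp: adim_dir)
  have "card ?X \<le> card ?Y"
    using card_inj_on_le[OF inj img] by simp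
  then have "real (card ?X) \<le> real (card ?Y)" by simp
  also have "\<dots> = gbinom CARD('a) (int (vec.dim (dir B)) - int (vec.dim (dir A))) (int m - int (vec.dim (dir A)))"
    using count_subspaces[OF aff_sub_E(1)[OF A] aff_sub_E(1)[OF B] dir_mono[OF AB]] m1 m2
    by (simp add: adim_dir)
  finally show ?thesis by (simp add: adim_dir)
qed

definition aext :: "('a::field^'n) set \<Rightarrow> 'a^'n \<Rightarrow> ('a^'n) set" where
  "aext S x = aff (SOME p. p \<in> S) (vec.span (insert (x - (SOME p. p \<in> S)) (dir S)))"

definition ajoin :: "('a::field^'n) set \<Rightarrow> ('a^'n) set \<Rightarrow> ('a^'n) set" where
  "ajoin S T = aff (SOME p. p \<in> S \<inter> T) (vec.span (dir S \<union> dir T))"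

lemma ext_props:
  assumes S: "aff_sub S"
  shows "aff_sub (aext S x)" "S \<subseteq> aext S x" "x \<in> aext S x"
    "\<And>U. aff_sub U \<Longrightarrow> S \<subseteq> U \<Longrightarrow> x \<in> U \<Longrightarrow> aext S x \<subseteq> U"
    "x \<notin> S \<Longrightarrow> adim (aext S x) = adim S + 1"
proof -
  have p: "(SOME p. p \<in> S) \<in> S" using aff_sub_E(2)[OF S] by (simp add: some_in_eq)
  note e = aff_ext[OF S p, where x=x, folded aext_def]
  show "aff_sub (aext S x)" "S \<subseteq> aext S x" "x \<in> aext S x" using e by auto
  show "\<And>U. aff_sub U \<Longrightarrow> S \<subseteq> U \<Longrightarrow> x \<in> U \<Longrightarrow> aext S x \<subseteq> U" using e by auto
  show "x \<notin> S \<Longrightarrow> adim (aext S x) = adim S + 1" using e by auto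
qed

lemma join_props:
  assumes S: "aff_sub S" and T: "aff_sub T" and ne: "S \<inter> T \<noteq> {}"
  shows "aff_sub (ajoin S T)" "S \<subseteq> ajoin S T" "T \<subseteq> ajoin S T"
    "adim (ajoin S T) + adim (S \<inter> T) = adim S + adim T"
proof -
  have p: "(SOME p. p \<in> S \<inter> T) \<in> S \<inter> T" by (rule someI_ex) (use ne in auto)
  note e = aff_join[OF S T, of "SOME p. p \<in> S \<inter> T", folded ajoin_def]
  show "aff_sub (ajoin S T)" "S \<subseteq> ajoin S T" "T \<subseteq> ajoin S T"
    "adim (ajoin S T) + adim (S \<inter> T) = adim S + adim T" using e p by auto
qed

lemma gbinom_1:
  assumes "N \<ge> 0"
  shows "gbinom q N 1 = (real q ^ nat N - 1) / (real q - 1)"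
  unfolding gbinom_def using assms by simp

lemma gbinom_top:
  fixes q :: nat
  assumes q: "q \<ge> 2"
  shows "gbinom q (int N + 1) (int N) = (real q ^ (N + 1) - 1) / (real q - 1)"
proof -
  let ?q = "real q"
  have a: "(\<Prod>i<N. ?q ^ (N + 1 - i) - 1) = (\<Prod>i<N. ?q ^ (i + 2) - 1)"
  proof -
    have "(\<Prod>i<N. ?q ^ (N + 1 - i) - 1) = (\<Prod>i<N. (\<lambda>j. ?q ^ (j + 2) - 1) (N - Suc i))"
      by (rule prod.cong[OF refl]) (simp add: Suc_diff_Suc Suc_diff_le)
    also have "\<dots> = (\<Prod>i<N. ?q ^ (i + 2) - 1)" by (rule prod.nat_diff_reindex)
    finally show ?thesis .
  qed
  have tel: "(\<Prod>i<M. ?q ^ (i + 2) - 1) * (?q - 1) = (\<Prod>i<M. ?q ^ (i + 1) - 1) * (?q ^ (M + 1) - 1)" for M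
  proof (induction M)
    case 0 then show ?case by simp
  next
    case (Suc M)
    have "(\<Prod>i<Suc M. ?q ^ (i + 2) - 1) * (?q - 1) = ((\<Prod>i<M. ?q ^ (i + 2) - 1) * (?q - 1)) * (?q ^ (M + 2) - 1)"
      by (simp add: algebra_simps)
    also have "\<dots> = (\<Prod>i<M. ?q ^ (i + 1) - 1) * (?q ^ (M + 1) - 1) * (?q ^ (M + 2) - 1)" using Suc by simp
    also have "\<dots> = (\<Prod>i<Suc M. ?q ^ (i + 1) - 1) * (?q ^ (Suc M + 1) - 1)" by simp
    finally show ?case .
  qed
  have pos: "(\<Prod>i<N. ?q ^ (i + 1) - 1) > 0"
  proof (rule prod_pos)
    fix i assume "i \<in> {..<N}"
    have "?q ^ 1 \<le> ?q ^ (i + 1)" using q by (intro power_increasing) auto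
    then have "?q \<le> ?q ^ (i + 1)" by (simp only: power_one_right)
    moreover have "?q \<ge> 2" using q by simp
    ultimately show "?q ^ (i + 1) - 1 > 0" by linarith
  qed
  have q1: "?q - 1 > 0" using q by simp
  have "gbinom q (int N + 1) (int N) = (\<Prod>i<N. (?q ^ (N + 1 - i) - 1) / (?q ^ (i + 1) - 1))"
    unfolding gbinom_def by (simp add: nat_add_distrib)
  also have "\<dots> = (\<Prod>i<N. ?q ^ (i + 2) - 1) / (\<Prod>i<N. ?q ^ (i + 1) - 1)"
    unfolding prod_dividef a ..
  also have "\<dots> = (?q ^ (N + 1) - 1) / (?q - 1)"
  proof -
    define A where "A = (\<Prod>i<N. ?q ^ (i + 2) - 1)"
    define B where "B = (\<Prod>i<N. ?q ^ (i + 1) - 1)"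
    define C where "C = ?q ^ (N + 1) - 1"
    have "A * (?q - 1) = C * B" using tel[of N] unfolding A_def B_def C_def by (simp only: mult.commute)
    then have "A / B = C / (?q - 1)" using pos q1 unfolding B_def[symmetric] by (simp add: frac_eq_eq)
    then show ?thesis unfolding A_def B_def C_def .
  qed
  finally show ?thesis .
qed

lemma theta_ge:
  fixes q :: nat
  assumes q: "q \<ge> 2" and m: "m \<ge> 1"
  shows "theta q m \<ge> real q + 1"
proof -
  have "real q ^ (m + 1) \<ge> real q ^ 2" using q m by (intro power_increasing) auto
  then have "real q ^ (m + 1) - 1 \<ge> (real q + 1) * (real q - 1)" by (simp add: power2_eq_square algebra_simps)
  then show ?thesis unfolding theta_def using q by (simp add: field_simps)
qed

lemma theta_mono:
  fixes q :: nat
  assumes q: "q \<ge> 2" and "a \<le> b"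
  shows "theta q a \<le> theta q b"
proof -
  have "real q ^ (a + 1) \<le> real q ^ (b + 1)" using assms by (intro power_increasing) auto
  then show ?thesis unfolding theta_def using q by (simp add: divide_right_mono)
qed

lemma gbinom_nonneg:
  fixes q :: nat assumes q: "q \<ge> 2" shows "gbinom q N K \<ge> 0"
proof -
  have "(real q ^ (nat N - i) - 1) / (real q ^ (i + 1) - 1) \<ge> 0" for i
  proof -
    have "real q ^ (nat N - i) \<ge> 1" using q by (intro one_le_power) simp
    moreover have "real q ^ (i + 1) \<ge> 1" using q by (intro one_le_power) simp
    ultimately show ?thesis by simp
  qed
  then show ?thesis unfolding gbinom_def by (auto intro: prod_nonneg)
qed

lemma meets_subI:
  assumes "aff_sub S" "S \<subseteq> T" "adim S \<ge> t"
  shows "meets_t t S T"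
proof -
  have "S \<inter> T = S" using assms(2) by blast
  then show ?thesis unfolding meets_t_def using aff_sub_E(2)[OF assms(1)] assms(3) by simp
qed

lemma int_aff:
  assumes "aff_sub S" "aff_sub T" "S \<inter> T \<noteq> {}"
  shows "aff_sub (S \<inter> T)"
proof -
  obtain p where "p \<in> S" "p \<in> T" using assms(3) by blast
  then show ?thesis using aff_int(2)[OF assms(1,2)] by blast
qed

lemma proper_int_less:
  assumes "aff_sub S" "aff_sub T" "S \<inter> T \<noteq> {}" "\<not> S \<subseteq> T"
  shows "adim (S \<inter> T) < adim S"
  using aff_less[OF int_aff[OF assms(1-3)] assms(1)] assms(4) by blast

lemma singleton_aff: "aff_sub {w::'a::field^'n}" "adim {w} = 0"
proof -
  have s: "vec.subspace (vec.span ({} :: ('a^'n) set))" by (rule vec.subspace_span)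
  have "aff w (vec.span {}) = {w}" unfolding aff_def by simp
  then show "aff_sub {w}" using aff_sub_aff[OF s, of w] by simp
  have "dir {w} = vec.span {}" unfolding dir_def by simp
  then show "adim {w} = 0" unfolding adim_dir by simp
qed

lemma real_card_UN_le:
  assumes "finite I"
  shows "real (card (\<Union>i\<in>I. A i)) \<le> (\<Sum>i\<in>I. real (card (A i)))"
proof -
  have "card (\<Union>i\<in>I. A i) \<le> (\<Sum>i\<in>I. card (A i))" by (rule card_UN_le[OF assms])
  then have "real (card (\<Union>i\<in>I. A i)) \<le> real (\<Sum>i\<in>I. card (A i))" by (simp only: of_nat_le_iff)
  then show ?thesis by simp
qed

lemma sum_le_card_mult:
  fixes f :: "'b \<Rightarrow> real"
  assumes "\<And>i. i \<in> A \<Longrightarrow> f i \<le> c" "real (card A) \<le> m" "c \<ge> 0"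
  shows "(\<Sum>i\<in>A. f i) \<le> m * c"
proof -
  have "(\<Sum>i\<in>A. f i) \<le> real (card A) * c" using sum_bounded_above[of A f c] assms(1) by simp
  also have "\<dots> \<le> m * c" using assms(2,3) by (intro mult_right_mono) auto
  finally show ?thesis .
qed

theorem mainTheorem14:
  fixes F :: "('a::{field,finite} ^ 'n) set set"
    and k t :: nat
  defines "q \<equiv> CARD('a)"
    and "n \<equiv> CARD('n)"
  assumes "int n > 2 * int k - int t"
    and "k > t"
    and "maximal_t_intersecting k t F"
    and "psi t F = t + 1"
    and "card (psi_spaces t F) \<le> 2"
  shows "real (card F) \<le>
    2 * gbinom q (int n - int t - 1) (int k - int t - 1)
    + (theta q (t + 1) * theta q (k - t) - theta q (t + 1) - theta q (k - t))
      * theta q (k - t) * gbinom q (int n - int t - 2) (int k - int t - 2)"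
proof -
  note hn = assms(3) and hkt = assms(4) and hmax = assms(5) and hpsi = assms(6) and hcard = assms(7)
  have q2: "q \<ge> 2" unfolding q_def by (rule card_field_ge2)
  have kn: "k \<le> n" using hn hkt by linarith
  have tn: "t + 2 < n" using hn hkt by linarith
  have Fk: "aff_sub S \<and> adim S = k" if "S \<in> F" for S
    using hmax that unfolding maximal_t_intersecting_def t_intersecting_def kspace_def by blast
  have Fm: "meets_t t S S'" if "S \<in> F" "S' \<in> F" for S S'
    using hmax that unfolding maximal_t_intersecting_def t_intersecting_def by blast
  define PS where "PS = psi_spaces t F"
  have PS_iff: "T \<in> PS \<longleftrightarrow> aff_sub T \<and> adim T = t + 1 \<and> (\<forall>S\<in>F. meets_t t T S)" for T :: "('a^'n) set"
    unfolding PS_def psi_spaces_def hpsi by simp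
  have noT: "\<exists>S\<in>F. \<not> meets_t t X S" if "aff_sub X" "adim X = t" for X :: "('a^'n) set"
  proof (rule ccontr)
    assume "\<not> (\<exists>S\<in>F. \<not> meets_t t X S)"
    then have "\<exists>T. aff_sub T \<and> adim T = t \<and> (\<forall>S\<in>F. meets_t t T S)" using that by blast
    then have "psi t F \<le> t" unfolding psi_def by (rule Least_le)
    then show False using hpsi by simp
  qed
  have "\<exists>T. aff_sub T \<and> adim T = psi t F \<and> (\<forall>S\<in>F. meets_t t T S)"
  proof -
    have "\<forall>S\<in>F. meets_t t UNIV S"
    proof
      fix S assume "S \<in> F"
      then show "meets_t t UNIV S" using Fk[of S] hkt aff_sub_E(2)[of S] unfolding meets_t_def by simp
    qed
    then have "\<exists>d T. aff_sub T \<and> adim T = d \<and> (\<forall>S\<in>F. meets_t t T S)"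
      using aff_sub_UNIV by blast
    then show ?thesis unfolding psi_def by (rule LeastI_ex)
  qed
  then obtain T1 where T1PS: "T1 \<in> PS" unfolding PS_iff hpsi by blast
  have T1: "aff_sub T1" "adim T1 = t + 1" "\<And>S. S \<in> F \<Longrightarrow> meets_t t T1 S"
    using T1PS PS_iff by auto

  define Ks where "Ks A = {X. aff_sub X \<and> adim X = k \<and> A \<subseteq> X \<and> X \<subseteq> UNIV}" for A :: "('a^'n) set"
  define G1 where "G1 = gbinom q (int n - int t - 1) (int k - int t - 1)"
  define G2 where "G2 = gbinom q (int n - int t - 2) (int k - int t - 2)"
  define th where "th = theta q (k - t)"
  have G1: "real (card (Ks T)) \<le> G1" if "aff_sub T" "adim T = t + 1" for T :: "('a^'n) set"
    using count_aff[of T UNIV k] that aff_sub_UNIV kn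
    unfolding Ks_def G1_def q_def n_def adim_UNIV by (simp add: algebra_simps)
  have G2: "real (card (Ks T)) \<le> G2" if "aff_sub T" "adim T = t + 2" for T :: "('a^'n) set"
    using count_aff[of T UNIV k] that aff_sub_UNIV kn
    unfolding Ks_def G2_def q_def n_def adim_UNIV by (simp add: algebra_simps)
  have G1nn: "G1 \<ge> 0" unfolding G1_def by (rule gbinom_nonneg[OF q2])
  have G2nn: "G2 \<ge> 0" unfolding G2_def by (rule gbinom_nonneg[OF q2])
  have th3: "th \<ge> 3"
  proof -
    have "theta q (k - t) \<ge> real q + 1" using theta_ge[OF q2, of "k - t"] hkt by simp
    moreover have "real q \<ge> 2" using q2 by simp
    ultimately show ?thesis unfolding th_def by linarith
  qed
  have tht3: "theta q (t + 1) \<ge> 3"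
  proof -
    have "theta q (t + 1) \<ge> real q + 1" using theta_ge[OF q2, of "t + 1"] by simp
    moreover have "real q \<ge> 2" using q2 by simp
    ultimately show ?thesis by linarith
  qed

  define R where "R = {\<alpha> \<in> F. \<forall>T\<in>PS. \<not> T \<subseteq> \<alpha>}"
  have Fsub: "F \<subseteq> (\<Union>T\<in>PS. Ks T) \<union> R"
  proof
    fix \<alpha> assume a: "\<alpha> \<in> F"
    show "\<alpha> \<in> (\<Union>T\<in>PS. Ks T) \<union> R"
    proof (cases "\<exists>T\<in>PS. T \<subseteq> \<alpha>")
      case True
      then show ?thesis using Fk[OF a] unfolding Ks_def by blast
    next
      case False
      then show ?thesis using a unfolding R_def by blast
    qed
  qed
  have cardF: "real (card F) \<le> 2 * G1 + real (card R)"
  proof -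
    have "card F \<le> card ((\<Union>T\<in>PS. Ks T) \<union> R)" using Fsub by (intro card_mono) auto
    also have "\<dots> \<le> card (\<Union>T\<in>PS. Ks T) + card R" by (rule card_Un_le)
    finally have "real (card F) \<le> real (card (\<Union>T\<in>PS. Ks T)) + real (card R)" by linarith
    also have "real (card (\<Union>T\<in>PS. Ks T)) \<le> (\<Sum>T\<in>PS. real (card (Ks T)))"
      by (rule real_card_UN_le) simp
    also have "\<dots> \<le> 2 * G1"
      by (rule sum_le_card_mult) (use G1 PS_iff hcard G1nn PS_def in auto)
    finally show ?thesis by simp
  qed
  define P where "P = {\<pi>. aff_sub \<pi> \<and> adim \<pi> = t \<and> \<pi> \<subseteq> T1}"
  define \<beta> where "\<beta> \<pi> = (SOME b. b \<in> F \<and> \<not> \<pi> \<subseteq> b)" for \<pi> :: "('a^'n) set"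
  define Sg where "Sg \<pi> = ajoin T1 (\<beta> \<pi>)" for \<pi>
  define M where "M \<pi> = {\<tau>. aff_sub \<tau> \<and> adim \<tau> = t + 1 \<and> \<pi> \<subseteq> \<tau> \<and> \<tau> \<subseteq> Sg \<pi> \<and> \<tau> \<noteq> T1 \<and> \<tau> \<notin> PS}" for \<pi>
  define \<gamma> where "\<gamma> \<tau> = (SOME g. g \<in> F \<and> \<not> meets_t t \<tau> g)" for \<tau> :: "('a^'n) set"
  define K where "K \<tau> = ajoin \<tau> T1" for \<tau>
  define J where "J \<tau> = ajoin (K \<tau>) (\<gamma> \<tau>)" for \<tau>
  define N where "N \<tau> = {\<nu>. aff_sub \<nu> \<and> adim \<nu> = t + 2 \<and> \<tau> \<subseteq> \<nu> \<and> \<nu> \<subseteq> J \<tau> \<and> \<nu> \<noteq> K \<tau>}" for \<tau>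

  have \<beta>_prop: "\<beta> \<pi> \<in> F \<and> \<not> \<pi> \<subseteq> \<beta> \<pi>" if "\<pi> \<in> P" for \<pi>
  proof -
    have a: "aff_sub \<pi>" "adim \<pi> = t" using that unfolding P_def by auto
    obtain S where S: "S \<in> F" "\<not> meets_t t \<pi> S" using noT[OF a] by blast
    then have "\<not> \<pi> \<subseteq> S" using meets_subI[OF a(1)] a(2) by auto
    then have "\<exists>b. b \<in> F \<and> \<not> \<pi> \<subseteq> b" using S by blast
    then show ?thesis unfolding \<beta>_def by (rule someI_ex)
  qed
  have \<gamma>_prop: "\<gamma> \<tau> \<in> F \<and> \<not> meets_t t \<tau> (\<gamma> \<tau>)" if "aff_sub \<tau>" "adim \<tau> = t + 1" "\<tau> \<notin> PS" for \<tau>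
  proof -
    have "\<exists>g. g \<in> F \<and> \<not> meets_t t \<tau> g" using that PS_iff by blast
    then show ?thesis unfolding \<gamma>_def by (rule someI_ex)
  qed
  have Sg_prop: "aff_sub (Sg \<pi>) \<and> T1 \<subseteq> Sg \<pi> \<and> \<beta> \<pi> \<subseteq> Sg \<pi> \<and> adim (Sg \<pi>) \<le> k + 1" if "\<pi> \<in> P" for \<pi>
  proof -
    have b: "\<beta> \<pi> \<in> F" using \<beta>_prop[OF that] by blast
    have m: "T1 \<inter> \<beta> \<pi> \<noteq> {}" "adim (T1 \<inter> \<beta> \<pi>) \<ge> t" using T1(3)[OF b] unfolding meets_t_def by auto
    note j = join_props[OF T1(1) conjunct1[OF Fk[OF b]] m(1), folded Sg_def]
    show ?thesis using j m(2) T1(2) Fk[OF b] by auto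
  qed
  have cardM: "real (card (M \<pi>)) \<le> th - 1" if "\<pi> \<in> P" for \<pi>
  proof -
    have pi: "aff_sub \<pi>" "adim \<pi> = t" "\<pi> \<subseteq> T1" using that unfolding P_def by auto
    note sg = Sg_prop[OF that]
    let ?X = "{\<tau>. aff_sub \<tau> \<and> adim \<tau> = t + 1 \<and> \<pi> \<subseteq> \<tau> \<and> \<tau> \<subseteq> Sg \<pi>}"
    have T1X: "T1 \<in> ?X" using T1 pi sg by auto
    have sub: "M \<pi> \<subseteq> ?X - {T1}" unfolding M_def by auto
    have "card (M \<pi>) \<le> card (?X - {T1})" by (rule card_mono[OF _ sub]) simp
    also have "\<dots> = card ?X - 1" using T1X by simp
    finally have c0: "card (M \<pi>) \<le> card ?X - 1" .
    have "card ?X > 0" using T1X by (auto simp: card_gt_0_iff)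
    then have c1: "real (card (M \<pi>)) \<le> real (card ?X) - 1" using c0 by linarith
    have ge: "t + 1 \<le> adim (Sg \<pi>)" using adim_mono[of T1 "Sg \<pi>"] sg T1(2) by simp
    have "real (card ?X) \<le> gbinom q (int (adim (Sg \<pi>)) - int t) (int (t + 1) - int t)"
      using count_aff[of \<pi> "Sg \<pi>" "t + 1"] pi sg ge unfolding q_def by auto
    also have "\<dots> = (real q ^ (adim (Sg \<pi>) - t) - 1) / (real q - 1)"
      using gbinom_1[of "int (adim (Sg \<pi>)) - int t" q] ge by (simp add: nat_diff_distrib)
    also have "\<dots> \<le> th" unfolding th_def theta_def
    proof (rule divide_right_mono)
      have "real q ^ (adim (Sg \<pi>) - t) \<le> real q ^ (k - t + 1)"
        using q2 sg hkt by (intro power_increasing) auto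
      then show "real q ^ (adim (Sg \<pi>) - t) - 1 \<le> real q ^ (k - t + 1) - 1" by simp
      show "0 \<le> real q - 1" using q2 by simp
    qed
    finally show ?thesis using c1 by simp
  qed
  have K_prop: "aff_sub (K \<tau>) \<and> \<tau> \<subseteq> K \<tau> \<and> T1 \<subseteq> K \<tau> \<and> adim (K \<tau>) = t + 2" if "\<pi> \<in> P" "\<tau> \<in> M \<pi>" for \<pi> \<tau>
  proof -
    have pi: "aff_sub \<pi>" "adim \<pi> = t" "\<pi> \<subseteq> T1" using that unfolding P_def by auto
    have ta: "aff_sub \<tau>" "adim \<tau> = t + 1" "\<pi> \<subseteq> \<tau>" "\<tau> \<noteq> T1" using that unfolding M_def by auto
    have ne: "\<tau> \<inter> T1 \<noteq> {}" using aff_sub_E(2)[OF pi(1)] pi(3) ta(3) by blast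
    have ia: "aff_sub (\<tau> \<inter> T1)" by (rule int_aff[OF ta(1) T1(1) ne])
    have ge: "adim (\<tau> \<inter> T1) \<ge> t" using adim_mono[of \<pi> "\<tau> \<inter> T1"] pi ta by auto
    have "\<tau> \<inter> T1 \<noteq> T1"
    proof
      assume "\<tau> \<inter> T1 = T1"
      then have "T1 \<subseteq> \<tau>" by blast
      then have "T1 = \<tau>" using aff_eq[OF T1(1) ta(1)] ta(2) T1(2) by simp
      then show False using ta(4) by simp
    qed
    then have "adim (\<tau> \<inter> T1) < adim T1" using aff_less[OF ia T1(1) Int_lower2] by blast
    then have "adim (\<tau> \<inter> T1) < t + 1" using T1(2) by simp
    then have eq: "adim (\<tau> \<inter> T1) = t" using ge by simp
    note j = join_props[OF ta(1) T1(1) ne, folded K_def]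
    show ?thesis using j eq ta(2) T1(2) by auto
  qed
  have J_prop: "aff_sub (J \<tau>) \<and> K \<tau> \<subseteq> J \<tau> \<and> \<gamma> \<tau> \<subseteq> J \<tau> \<and> adim (J \<tau>) \<le> k + 2" if "\<pi> \<in> P" "\<tau> \<in> M \<pi>" for \<pi> \<tau>
  proof -
    have ta: "aff_sub \<tau>" "adim \<tau> = t + 1" "\<tau> \<notin> PS" using that unfolding M_def by auto
    have g: "\<gamma> \<tau> \<in> F" using \<gamma>_prop[OF ta] by blast
    note kp = K_prop[OF that]
    have m: "T1 \<inter> \<gamma> \<tau> \<noteq> {}" "adim (T1 \<inter> \<gamma> \<tau>) \<ge> t" using T1(3)[OF g] unfolding meets_t_def by auto
    have ne: "K \<tau> \<inter> \<gamma> \<tau> \<noteq> {}" using m(1) kp by blast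
    have "T1 \<inter> \<gamma> \<tau> \<subseteq> K \<tau> \<inter> \<gamma> \<tau>" using kp by blast
    then have ge: "adim (K \<tau> \<inter> \<gamma> \<tau>) \<ge> t" using adim_mono m(2) order_trans by blast
    note j = join_props[OF conjunct1[OF kp] conjunct1[OF Fk[OF g]] ne, folded J_def]
    show ?thesis using j ge kp Fk[OF g] by auto
  qed
  have cardN: "real (card (N \<tau>)) \<le> th - 1" if "\<pi> \<in> P" "\<tau> \<in> M \<pi>" for \<pi> \<tau>
  proof -
    have ta: "aff_sub \<tau>" "adim \<tau> = t + 1" using that unfolding M_def by auto
    note kp = K_prop[OF that] and jp = J_prop[OF that]
    let ?X = "{\<nu>. aff_sub \<nu> \<and> adim \<nu> = t + 2 \<and> \<tau> \<subseteq> \<nu> \<and> \<nu> \<subseteq> J \<tau>}"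
    have KX: "K \<tau> \<in> ?X" using kp jp by auto
    have sub: "N \<tau> \<subseteq> ?X - {K \<tau>}" unfolding N_def by auto
    have "card (N \<tau>) \<le> card (?X - {K \<tau>})" by (rule card_mono[OF _ sub]) simp
    also have "\<dots> = card ?X - 1" using KX by simp
    finally have c0: "card (N \<tau>) \<le> card ?X - 1" .
    have "card ?X > 0" using KX by (auto simp: card_gt_0_iff)
    then have c1: "real (card (N \<tau>)) \<le> real (card ?X) - 1" using c0 by linarith
    have ge: "t + 2 \<le> adim (J \<tau>)" using adim_mono[of "K \<tau>" "J \<tau>"] kp jp by simp
    have "real (card ?X) \<le> gbinom q (int (adim (J \<tau>)) - int (t + 1)) (int (t + 2) - int (t + 1))"
      using count_aff[of \<tau> "J \<tau>" "t + 2"] ta jp kp ge unfolding q_def by auto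
    also have "\<dots> = (real q ^ (adim (J \<tau>) - (t + 1)) - 1) / (real q - 1)"
    proof -
      have e: "int (adim (J \<tau>)) - int (t + 1) = int (adim (J \<tau>) - (t + 1))" using ge by simp
      have e2: "int (t + 2) - int (t + 1) = 1" by simp
      show ?thesis unfolding e e2 using gbinom_1[of "int (adim (J \<tau>) - (t + 1))" q] by simp
    qed
    also have "\<dots> \<le> th" unfolding th_def theta_def
    proof (rule divide_right_mono)
      have "real q ^ (adim (J \<tau>) - (t + 1)) \<le> real q ^ (k - t + 1)"
        using q2 jp hkt by (intro power_increasing) auto
      then show "real q ^ (adim (J \<tau>) - (t + 1)) - 1 \<le> real q ^ (k - t + 1) - 1" by simp
      show "0 \<le> real q - 1" using q2 by simp
    qed
    finally show ?thesis using c1 by simp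
  qed
  have cardP: "real (card P) \<le> theta q (t + 1) - 1"
  proof -
    have "T1 \<noteq> UNIV"
    proof
      assume "T1 = UNIV"
      then have "adim T1 = n" unfolding n_def by (simp add: adim_UNIV)
      then show False using T1(2) tn by simp
    qed
    then obtain c where c: "c \<notin> T1" by blast
    define E where "E = aext T1 c"
    note ep = ext_props[OF T1(1), where x=c, folded E_def]
    have Ea: "aff_sub E" "T1 \<subseteq> E" "c \<in> E" "adim E = t + 2" using ep c T1(2) by auto
    define Par where "Par = aff c (dir T1)"
    have dT1: "vec.subspace (dir T1)" by (rule aff_sub_E(1)[OF T1(1)])
    let ?Y = "{X. aff_sub X \<and> adim X = t + 1 \<and> {c} \<subseteq> X \<and> X \<subseteq> E}"
    have ParY: "Par \<in> ?Y"
    proof -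
      have "aff_sub Par" unfolding Par_def by (rule aff_sub_aff[OF dT1])
      moreover have "adim Par = t + 1" unfolding Par_def adim_aff[OF dT1] using T1(2) by (simp add: adim_dir)
      moreover have "c \<in> Par" unfolding Par_def mem_aff using vec.subspace_0[OF dT1] by simp
      moreover have "Par \<subseteq> E"
      proof
        fix x assume "x \<in> Par"
        then have "x - c \<in> dir T1" unfolding Par_def mem_aff .
        then have "x - c \<in> dir E" using dir_mono[OF Ea(2)] by blast
        then show "x \<in> E" using mem_aff_sub[OF Ea(1) Ea(3)] by blast
      qed
      ultimately show ?thesis by auto
    qed
    have ParT1: "Par \<inter> T1 = {}"
    proof (rule ccontr)
      assume "Par \<inter> T1 \<noteq> {}"
      then obtain x where x: "x \<in> Par" "x \<in> T1" by blast
      then have "x - c \<in> dir T1" unfolding Par_def mem_aff by blast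
      then have "-(x - c) \<in> dir T1" using vec.subspace_neg[OF dT1] by blast
      then have "c - x \<in> dir T1" by simp
      then have "c \<in> T1" using mem_aff_sub[OF T1(1) x(2)] by blast
      then show False using c by blast
    qed
    define f where "f \<pi> = aext \<pi> c" for \<pi>
    have fprop: "f \<pi> \<in> ?Y \<and> f \<pi> \<inter> T1 = \<pi>" if "\<pi> \<in> P" for \<pi>
    proof -
      have pi: "aff_sub \<pi>" "adim \<pi> = t" "\<pi> \<subseteq> T1" using that unfolding P_def by auto
      note fp = ext_props[OF pi(1), where x=c, folded f_def]
      have cpi: "c \<notin> \<pi>" using c pi(3) by blast
      have fa: "aff_sub (f \<pi>)" "\<pi> \<subseteq> f \<pi>" "c \<in> f \<pi>" "adim (f \<pi>) = t + 1"
        using fp cpi pi(2) by auto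
      have fE: "f \<pi> \<subseteq> E" using fp(4)[OF Ea(1)] pi(3) Ea(2,3) by blast
      have ne: "f \<pi> \<inter> T1 \<noteq> {}" using aff_sub_E(2)[OF pi(1)] fa(2) pi(3) by blast
      have ia: "aff_sub (f \<pi> \<inter> T1)" by (rule int_aff[OF fa(1) T1(1) ne])
      have "f \<pi> \<inter> T1 \<noteq> T1"
      proof
        assume "f \<pi> \<inter> T1 = T1"
        then have "T1 \<subseteq> f \<pi>" by blast
        then have "T1 = f \<pi>" using aff_eq[OF T1(1) fa(1)] fa(4) T1(2) by simp
        then show False using c fa(3) by simp
      qed
      then have "adim (f \<pi> \<inter> T1) < adim T1" using aff_less[OF ia T1(1) Int_lower2] by blast
      then have "adim (f \<pi> \<inter> T1) \<le> adim \<pi>" using T1(2) pi(2) by simp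
      moreover have "\<pi> \<subseteq> f \<pi> \<inter> T1" using fa(2) pi(3) by blast
      ultimately have "\<pi> = f \<pi> \<inter> T1" using aff_eq[OF pi(1) ia] by blast
      then show ?thesis using fa fE by auto
    qed
    have inj: "inj_on f P"
    proof (rule inj_onI)
      fix x y assume "x \<in> P" "y \<in> P" "f x = f y"
      then show "x = y" using fprop by metis
    qed
    have img: "f ` P \<subseteq> ?Y - {Par}"
    proof
      fix X assume "X \<in> f ` P"
      then obtain \<pi> where pi: "\<pi> \<in> P" "X = f \<pi>" by blast
      have "\<pi> \<noteq> {}" using pi(1) aff_sub_E(2) unfolding P_def by blast
      then have "X \<noteq> Par" using fprop[OF pi(1)] pi(2) ParT1 by auto
      then show "X \<in> ?Y - {Par}" using fprop[OF pi(1)] pi(2) by blast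
    qed
    have "card P \<le> card (?Y - {Par})" using card_inj_on_le[OF inj img] by simp
    also have "\<dots> = card ?Y - 1" using ParY by simp
    finally have c0: "card P \<le> card ?Y - 1" .
    have "card ?Y > 0" using ParY by (auto simp: card_gt_0_iff)
    then have c1: "real (card P) \<le> real (card ?Y) - 1" using c0 by linarith
    have "real (card ?Y) \<le> gbinom q (int (adim E) - int (adim {c})) (int (t + 1) - int (adim {c}))"
      using count_aff[of "{c}" E "t + 1"] singleton_aff[of c] Ea unfolding q_def by auto
    also have "\<dots> = gbinom q (int (t + 1) + 1) (int (t + 1))"
      using Ea(4) singleton_aff(2)[of c] by simp
    also have "\<dots> = theta q (t + 1)"
      unfolding gbinom_top[OF q2] theta_def by simp
    finally show ?thesis using c1 by simp
  qed
  have cover: "R \<subseteq> (\<Union>\<pi>\<in>P. \<Union>\<tau>\<in>M \<pi>. \<Union>\<nu>\<in>N \<tau>. Ks \<nu>)"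
  proof
    fix \<alpha> assume aR: "\<alpha> \<in> R"
    then have aF: "\<alpha> \<in> F" and noPS: "\<And>T. T \<in> PS \<Longrightarrow> \<not> T \<subseteq> \<alpha>" unfolding R_def by auto
    have aa: "aff_sub \<alpha>" "adim \<alpha> = k" using Fk[OF aF] by auto
    have m1: "T1 \<inter> \<alpha> \<noteq> {}" "adim (T1 \<inter> \<alpha>) \<ge> t" using T1(3)[OF aF] unfolding meets_t_def by auto
    define \<pi> where "\<pi> = T1 \<inter> \<alpha>"
    have pia: "aff_sub \<pi>" unfolding \<pi>_def by (rule int_aff[OF T1(1) aa(1) m1(1)])
    have "\<not> T1 \<subseteq> \<alpha>" using noPS[OF T1PS] .
    then have "adim \<pi> < adim T1" unfolding \<pi>_def by (rule proper_int_less[OF T1(1) aa(1) m1(1)])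
    then have pidim: "adim \<pi> = t" using m1(2) T1(2) unfolding \<pi>_def by simp
    have piP: "\<pi> \<in> P" unfolding P_def using pia pidim by (auto simp: \<pi>_def)
    define b where "b = \<beta> \<pi>"
    have bF: "b \<in> F" and npb: "\<not> \<pi> \<subseteq> b" using \<beta>_prop[OF piP] unfolding b_def by auto
    have ba: "aff_sub b" using Fk[OF bF] by auto
    have m2: "\<alpha> \<inter> b \<noteq> {}" "adim (\<alpha> \<inter> b) \<ge> t" using Fm[OF aF bF] unfolding meets_t_def by auto
    obtain x where x: "x \<in> \<alpha>" "x \<in> b" "x \<notin> \<pi>"
    proof (rule ccontr)
      assume "\<not> thesis"
      with that have sub: "\<alpha> \<inter> b \<subseteq> \<pi> \<inter> b" by blast
      then have ne: "\<pi> \<inter> b \<noteq> {}" using m2(1) by blast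
      have "adim (\<pi> \<inter> b) < adim \<pi>" by (rule proper_int_less[OF pia ba ne npb])
      moreover have "adim (\<alpha> \<inter> b) \<le> adim (\<pi> \<inter> b)" by (rule adim_mono[OF sub])
      ultimately show False using m2(2) pidim by simp
    qed
    define \<tau> where "\<tau> = aext \<pi> x"
    note tp = ext_props[OF pia, where x=x, folded \<tau>_def]
    have ta: "aff_sub \<tau>" "\<pi> \<subseteq> \<tau>" "x \<in> \<tau>" "adim \<tau> = t + 1" using tp x(3) pidim by auto
    have tal: "\<tau> \<subseteq> \<alpha>" using tp(4)[OF aa(1)] x(1) unfolding \<pi>_def by blast
    have sg: "aff_sub (Sg \<pi>)" "T1 \<subseteq> Sg \<pi>" "b \<subseteq> Sg \<pi>" using Sg_prop[OF piP] unfolding b_def by auto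
    have tsg: "\<tau> \<subseteq> Sg \<pi>" using tp(4)[OF sg(1)] sg(2,3) x(2) unfolding \<pi>_def by blast
    have tT1: "\<tau> \<noteq> T1"
    proof
      assume "\<tau> = T1"
      then have "x \<in> T1" using ta(3) by simp
      then show False using x(1,3) unfolding \<pi>_def by blast
    qed
    have tPS: "\<tau> \<notin> PS" using noPS tal by blast
    have tM: "\<tau> \<in> M \<pi>" unfolding M_def using ta tsg tT1 tPS by blast
    define g where "g = \<gamma> \<tau>"
    have gF: "g \<in> F" and nmg: "\<not> meets_t t \<tau> g" using \<gamma>_prop[OF ta(1) ta(4) tPS] unfolding g_def by auto
    have m3: "\<alpha> \<inter> g \<noteq> {}" "adim (\<alpha> \<inter> g) \<ge> t" using Fm[OF aF gF] unfolding meets_t_def by auto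
    obtain y where y: "y \<in> \<alpha>" "y \<in> g" "y \<notin> \<tau>"
    proof (rule ccontr)
      assume "\<not> thesis"
      with that have sub: "\<alpha> \<inter> g \<subseteq> \<tau> \<inter> g" by blast
      then have "\<tau> \<inter> g \<noteq> {}" using m3(1) by blast
      moreover have "adim (\<tau> \<inter> g) \<ge> t" using adim_mono[OF sub] m3(2) by simp
      ultimately show False using nmg unfolding meets_t_def by blast
    qed
    define \<nu> where "\<nu> = aext \<tau> y"
    note np = ext_props[OF ta(1), where x=y, folded \<nu>_def]
    have na: "aff_sub \<nu>" "\<tau> \<subseteq> \<nu>" "y \<in> \<nu>" "adim \<nu> = t + 2" using np y(3) ta(4) by auto
    have nal: "\<nu> \<subseteq> \<alpha>" using np(4)[OF aa(1) tal y(1)] .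
    have kp: "aff_sub (K \<tau>)" "\<tau> \<subseteq> K \<tau>" "T1 \<subseteq> K \<tau>" using K_prop[OF piP tM] by auto
    have jp: "aff_sub (J \<tau>)" "K \<tau> \<subseteq> J \<tau>" "\<gamma> \<tau> \<subseteq> J \<tau>" using J_prop[OF piP tM] by auto
    have nJ: "\<nu> \<subseteq> J \<tau>" using np(4)[OF jp(1)] kp(2) jp(2,3) y(2) unfolding g_def by blast
    have nK: "\<nu> \<noteq> K \<tau>"
    proof
      assume "\<nu> = K \<tau>"
      then have "T1 \<subseteq> \<alpha>" using kp(3) nal by blast
      then show False using noPS[OF T1PS] by blast
    qed
    have nN: "\<nu> \<in> N \<tau>" unfolding N_def using na nJ nK by blast
    have "\<alpha> \<in> Ks \<nu>" unfolding Ks_def using aa nal by blast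
    then show "\<alpha> \<in> (\<Union>\<pi>\<in>P. \<Union>\<tau>\<in>M \<pi>. \<Union>\<nu>\<in>N \<tau>. Ks \<nu>)" using piP tM nN by blast
  qed
  have th1: "th - 1 \<ge> 0" using th3 by simp
  have cardR: "real (card R) \<le> (theta q (t + 1) - 1) * ((th - 1) * ((th - 1) * G2))"
  proof -
    have "card R \<le> card (\<Union>\<pi>\<in>P. \<Union>\<tau>\<in>M \<pi>. \<Union>\<nu>\<in>N \<tau>. Ks \<nu>)" by (rule card_mono[OF _ cover]) simp
    then have "real (card R) \<le> real (card (\<Union>\<pi>\<in>P. \<Union>\<tau>\<in>M \<pi>. \<Union>\<nu>\<in>N \<tau>. Ks \<nu>))" by simp
    also have "\<dots> \<le> (\<Sum>\<pi>\<in>P. real (card (\<Union>\<tau>\<in>M \<pi>. \<Union>\<nu>\<in>N \<tau>. Ks \<nu>)))"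
      by (rule real_card_UN_le) simp
    also have "\<dots> \<le> (theta q (t + 1) - 1) * ((th - 1) * ((th - 1) * G2))"
    proof (rule sum_le_card_mult)
      show "real (card P) \<le> theta q (t + 1) - 1" by (rule cardP)
      show "0 \<le> (th - 1) * ((th - 1) * G2)" using th1 G2nn by simp
      fix \<pi> assume piP: "\<pi> \<in> P"
      have "real (card (\<Union>\<tau>\<in>M \<pi>. \<Union>\<nu>\<in>N \<tau>. Ks \<nu>)) \<le> (\<Sum>\<tau>\<in>M \<pi>. real (card (\<Union>\<nu>\<in>N \<tau>. Ks \<nu>)))"
        by (rule real_card_UN_le) simp
      also have "\<dots> \<le> (th - 1) * ((th - 1) * G2)"
      proof (rule sum_le_card_mult)
        show "real (card (M \<pi>)) \<le> th - 1" by (rule cardM[OF piP])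
        show "0 \<le> (th - 1) * G2" using th1 G2nn by simp
        fix \<tau> assume tM: "\<tau> \<in> M \<pi>"
        have "real (card (\<Union>\<nu>\<in>N \<tau>. Ks \<nu>)) \<le> (\<Sum>\<nu>\<in>N \<tau>. real (card (Ks \<nu>)))"
          by (rule real_card_UN_le) simp
        also have "\<dots> \<le> (th - 1) * G2"
        proof (rule sum_le_card_mult)
          show "real (card (N \<tau>)) \<le> th - 1" by (rule cardN[OF piP tM])
          show "0 \<le> G2" by (rule G2nn)
          fix \<nu> assume "\<nu> \<in> N \<tau>"
          then show "real (card (Ks \<nu>)) \<le> G2" using G2 unfolding N_def by blast
        qed
        finally show "real (card (\<Union>\<nu>\<in>N \<tau>. Ks \<nu>)) \<le> (th - 1) * G2" .
      qed
      finally show "real (card (\<Union>\<tau>\<in>M \<pi>. \<Union>\<nu>\<in>N \<tau>. Ks \<nu>)) \<le> (th - 1) * ((th - 1) * G2)" .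
    qed
    finally show ?thesis .
  qed
  have arith: "(theta q (t + 1) - 1) * ((th - 1) * ((th - 1) * G2))
      \<le> (theta q (t + 1) * th - theta q (t + 1) - th) * th * G2"
  proof -
    define A where "A = theta q (t + 1)"
    have A3: "A \<ge> 3" using tht3 unfolding A_def .
    have "(A - 1) * (th - 1) \<ge> th"
    proof -
      have "(A - 1) * (th - 1) \<ge> 2 * (th - 1)" using A3 th1 by (intro mult_right_mono) auto
      moreover have "th \<le> 2 * (th - 1)" using th3 by (simp add: algebra_simps)
      ultimately show ?thesis by linarith
    qed
    then have "(A - 1) * (th - 1) * (th - 1) \<le> (A * th - A - th) * th"
      by (simp add: algebra_simps)
    then have "(A - 1) * (th - 1) * (th - 1) * G2 \<le> (A * th - A - th) * th * G2"
      using G2nn by (rule mult_right_mono)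
    then show ?thesis unfolding A_def by (simp add: mult.assoc)
  qed
  show ?thesis using cardF cardR arith unfolding G1_def G2_def th_def by linarith
qed

end
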